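(* Let $N\ge1$, $n\ge1$, and let $f=f(w)$ be a polynomial in one variable. Then in $\tilde{\mathcal A}_\hbar$, $$\Big[\sum_{i=1}^N\bar B_n(\bar w_i),E_1[f]\Big]=-\hbar\,E_1[f\cdot(\bar w+\hbar)^{n-1}],\qquad\Big[\sum_{i=1}^N\bar B_n(\bar w_i),F_1[f]\Big]=\hbar\,F_1[f\cdot(\bar w+\hbar)^{n-1}],$$ where $\bar w_i=w_i-(N-1)\mathbf t$ and $f\cdot(\bar w+\hbar)^{n-1}$ denotes the polynomial $w\mapsto f(w)\,(w-(N-1)\mathbf t+\hbar)^{n-1}$.
   Context: $\tilde{\mathcal A}_\hbar$ is the $\mathbb C[\hbar,\mathbf t]$-algebra generated by $w_1,\dots,w_N$, $\mathsf u_1^{\pm1},\dots,\mathsf u_N^{\pm1}$, $(w_i-w_j)^{-1}$ ($i\ne j$) with relations: the $w_i$ and $(w_i-w_j)^{-1}$ pairwise commute, $(w_i-w_j)(w_i-w_j)^{-1}=1$, $[\mathsf u_i,\mathsf u_j]=0$, $\mathsf u_i\mathsf u_i^{-1}=\mathsf u_i^{-1}\mathsf u_i=1$, $[\mathsf u_i^{\pm1},w_j]=\pm\delta_{ij}\hbar\mathsf u_i^{\pm1}$. For a one-variable polynomial $f$: $E_1[f]=\sum_{i=1}^Nf(w_i)\prod_{j\ne i}\frac{w_i-w_j-\mathbf t}{w_i-w_j}\mathsf u_i$ and $F_1[f]=\sum_{i=1}^Nf(w_i-\hbar)\prod_{j\ne i}\frac{w_i-w_j+\mathbf t}{w_i-w_j}\mathsf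 u_i^{-1}$. $B_n$ are the Bernoulli polynomials ($B_n(x+1)-B_n(x)=nx^{n-1}$, $\int_0^1B_n=0$) and $\bar B_n(w)=(-\hbar)^nB_n(-w/\hbar)/n$. *)

theory Defs
  imports "HOL-Analysis.Analysis" "HOL-Computational_Algebra.Polynomial"
begin

definition bernoulli_poly :: "nat \<Rightarrow> real poly" where
  "bernoulli_poly n = (THE p. (\<forall>x. poly p (x + 1) - poly p x = of_nat n * x ^ (n - 1))
                              \<and> integral {0..1} (poly p) = 0)"

definition comm :: "'a::ring \<Rightarrow> 'a \<Rightarrow> 'a" where
  "comm a b = a * b - b * a"

text \<open>Evaluation of a complex polynomial at an element of an algebra, the complex
  scalars acting through the structure map emb.\<close>
definition peval :: "(complex \<Rightarrow> 'a::ring_1) \<Rightarrow> complex poly \<Rightarrow> 'a \<Rightarrow> 'a" where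
  "peval emb f x = (\<Sum>k\<le>degree f. emb (coeff f k) * x ^ k)"

text \<open>\<open>Bbar_n(x) = (-h)^n B_n(-x/h)/n\<close>, written out as the homogeneous polynomial in
  (h, x) it denotes: \<open>(1/n) \<Sum>_j c_j (-h)^(n-j) x^j\<close> with \<open>c_j\<close> the coefficients of B_n.\<close>
definition Bbar :: "(complex \<Rightarrow> 'a::ring_1) \<Rightarrow> 'a \<Rightarrow> nat \<Rightarrow> 'a \<Rightarrow> 'a" where
  "Bbar emb h n x = emb (complex_of_real (1 / real n)) *
     (\<Sum>j\<le>n. emb (complex_of_real (coeff (bernoulli_poly n) j)) * (- h) ^ (n - j) * x ^ j)"

text \<open>E_1[g] and F_1[g]; g is the evaluation map of a one-variable polynomial.
  The product over j /= i is an ordered product (j increasing); its factors commute.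
  d i j stands for (w_i - w_j)^{-1}, ui i for u_i^{-1}.\<close>
definition E1 :: "nat \<Rightarrow> (nat \<Rightarrow> 'a::ring_1) \<Rightarrow> (nat \<Rightarrow> 'a) \<Rightarrow> (nat \<Rightarrow> nat \<Rightarrow> 'a) \<Rightarrow> 'a
                   \<Rightarrow> ('a \<Rightarrow> 'a) \<Rightarrow> 'a" where
  "E1 N w u d t g = (\<Sum>i\<in>{1..N}. g (w i) *
      prod_list (map (\<lambda>j. (w i - w j - t) * d i j) (filter (\<lambda>j. j \<noteq> i) [1..<N+1])) * u i)"

definition F1 :: "nat \<Rightarrow> (nat \<Rightarrow> 'a::ring_1) \<Rightarrow> (nat \<Rightarrow> 'a) \<Rightarrow> (nat \<Rightarrow> nat \<Rightarrow> 'a) \<Rightarrow> 'a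
                   \<Rightarrow> 'a \<Rightarrow> ('a \<Rightarrow> 'a) \<Rightarrow> 'a" where
  "F1 N w ui d t h g = (\<Sum>i\<in>{1..N}. g (w i - h) *
      prod_list (map (\<lambda>j. (w i - w j + t) * d i j) (filter (\<lambda>j. j \<noteq> i) [1..<N+1])) * ui i)"

end

theory Submission
  imports Defs
begin


definition dpoly :: "nat \<Rightarrow> (nat \<Rightarrow> real) \<Rightarrow> real poly" where
  "dpoly k b = (\<Sum>i\<le>k. monom (b i) i)"

lemma coeff_dpoly: "coeff (dpoly k b) j = (if j \<le> k then b j else 0)"
  unfolding dpoly_def by (simp add: coeff_sum coeff_monom)

lemma poly_dpoly: "poly (dpoly k b) x = (\<Sum>i\<le>k. b i * x ^ i)"
  unfolding dpoly_def by (simp add: poly_sum poly_monom)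

lemma diff_exists:
  "degree (r::real poly) \<le> k \<Longrightarrow> \<exists>q. degree q \<le> k + 1 \<and> (\<forall>x. poly q (x+1) - poly q x = poly r x)"
proof (induction k arbitrary: r)
  case 0
  then obtain a where r: "r = [:a:]" using degree0_coeffs by blast
  show ?case by (rule exI[of _ "[:0,a:]"]) (auto simp: r algebra_simps)
next
  case (Suc k)
  define a where "a = coeff r (Suc k)"
  define s where "s = monom (a / real (Suc k + 1)) (Suc k + 1)"
  define D where "D = dpoly (Suc k) (\<lambda>i. a / real (Suc k + 1) * real (Suc (Suc k) choose i))"
  have polyD: "poly D x = poly s (x+1) - poly s x" for x
  proof -
    have "(x+1)^(Suc (Suc k)) = (\<Sum>i\<le>Suc (Suc k). real (Suc (Suc k) choose i) * x ^ i)"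
      using binomial_ring[of x 1 "Suc (Suc k)"] by simp
    also have "\<dots> = (\<Sum>i\<le>Suc k. real (Suc (Suc k) choose i) * x ^ i) + x ^ Suc (Suc k)"
      by (subst sum.atMost_Suc) simp
    finally have bx: "(\<Sum>i\<le>Suc k. real (Suc (Suc k) choose i) * x ^ i) = (x+1)^(Suc (Suc k)) - x ^ Suc (Suc k)" by simp
    have "poly D x = a / real (Suc k + 1) * (\<Sum>i\<le>Suc k. real (Suc (Suc k) choose i) * x ^ i)"
      unfolding D_def poly_dpoly by (simp add: sum_distrib_left mult.assoc del: sum.atMost_Suc)
    also have "\<dots> = poly s (x+1) - poly s x" unfolding bx s_def poly_monom by (simp add: algebra_simps)
    finally show ?thesis .
  qed
  define r' where "r' = r - D"
  have "coeff r' j = 0" if "j > k" for j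
  proof (cases "j = Suc k")
    case True
    then show ?thesis unfolding r'_def D_def by (simp add: coeff_dpoly a_def)
  next
    case False
    with that have "j > Suc k" by simp
    then show ?thesis unfolding r'_def D_def using Suc.prems
      by (simp add: coeff_dpoly coeff_eq_0)
  qed
  hence "degree r' \<le> k" using degree_le by (metis not_le)
  from Suc.IH[OF this] obtain q where q: "degree q \<le> k + 1" "\<forall>x. poly q (x+1) - poly q x = poly r' x" by blast
  show ?case
  proof (rule exI[of _ "q + s"], intro conjI allI)
    have "degree s \<le> Suc k + 1" unfolding s_def by (rule degree_monom_le)
    moreover have "degree (q + s) \<le> max (degree q) (degree s)" by (rule degree_add_le_max)
    ultimately show "degree (q + s) \<le> Suc k + 1" using q(1) by simp
    fix x show "poly (q + s) (x + 1) - poly (q + s) x = poly r x"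
    proof -
      have "poly q (x+1) - poly q x = poly r x - poly D x" using q(2) unfolding r'_def by simp
      thus ?thesis using polyD[of x] by (simp add: algebra_simps)
    qed
  qed
qed

definition bprop :: "nat \<Rightarrow> real poly \<Rightarrow> bool" where
  "bprop n p \<longleftrightarrow> (\<forall>x. poly p (x + 1) - poly p x = of_nat n * x ^ (n - 1))
                              \<and> integral {0..1} (poly p) = 0"

lemma poly_integrable: "poly (p::real poly) integrable_on {0..1}"
proof -
  have "continuous_on {0..1} (\<lambda>x. poly p x)" by (intro continuous_intros)
  thus ?thesis by (rule integrable_continuous_real)
qed

lemma integral_const01: "integral {0..1::real} (\<lambda>x. c) = c"
  using has_integral_const_real[of c 0 1] by (simp add: integral_unique)

lemma bprop_unique:
  assumes "bprop n p" "bprop n q" shows "p = q"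
proof -
  define r where "r = p - q"
  have per: "poly r (x+1) = poly r x" for x
  proof -
    have "poly p (x + 1) - poly p x = poly q (x + 1) - poly q x" using assms unfolding bprop_def by simp
    thus ?thesis unfolding r_def by (simp add: algebra_simps)
  qed
  have nat: "poly r (real m) = poly r 0" for m
  proof (induction m)
    case (Suc m)
    have "poly r (real (Suc m)) = poly r (real m + 1)" by (simp add: add.commute)
    also have "\<dots> = poly r (real m)" by (rule per)
    finally show ?case using Suc by simp
  qed simp
  define c where "c = poly r 0"
  have "r - [:c:] = 0"
  proof (rule ccontr)
    assume ne: "r - [:c:] \<noteq> 0"
    have "range real \<subseteq> {x. poly (r - [:c:]) x = 0}" using nat by (auto simp: c_def)
    moreover have "infinite (range real)" using inj_of_nat infinite_UNIV_nat finite_imageD by blast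
    ultimately show False using poly_roots_finite[OF ne] finite_subset by blast
  qed
  hence rc: "r = [:c:]" by simp
  have "poly r = (\<lambda>x. poly p x - poly q x)" by (simp add: r_def fun_eq_iff)
  hence "integral {0..1} (poly r) = integral {0..1} (\<lambda>x. poly p x - poly q x)" by simp
  also have "\<dots> = integral {0..1} (poly p) - integral {0..1} (poly q)"
    by (rule Henstock_Kurzweil_Integration.integral_diff[OF poly_integrable poly_integrable])
  also have "\<dots> = 0" using assms unfolding bprop_def by simp
  moreover have "poly r = (\<lambda>x::real. c)" using rc by (simp add: fun_eq_iff)
  ultimately have "integral {0..1} (\<lambda>x::real. c) = 0" by simp
  hence "c = 0" by (simp add: integral_const01)
  thus ?thesis using rc r_def by simp
qed

lemma bprop_exists:
  assumes "n \<ge> 1" shows "\<exists>p. bprop n p \<and> degree p \<le> n"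
proof -
  have "degree (monom (real n) (n-1)) \<le> n - 1" by (rule degree_monom_le)
  from diff_exists[OF this] obtain q where q: "degree q \<le> n - 1 + 1" "\<forall>x. poly q (x+1) - poly q x = poly (monom (real n) (n-1)) x"
    by blast
  define I where "I = integral {0..1} (poly q)"
  have hq: "(poly q has_integral I) {0..1}" unfolding I_def using poly_integrable by (rule integrable_integral)
  have hc: "((\<lambda>x::real. -I) has_integral -I) {0..1}" using has_integral_const_real[of "-I" 0 1] by simp
  have "((\<lambda>x. poly q x + -I) has_integral I + -I) {0..1}" by (rule has_integral_add[OF hq hc])
  moreover have "poly (q + [:-I:]) = (\<lambda>x. poly q x + -I)" by (simp add: fun_eq_iff)
  ultimately have "integral {0..1} (poly (q + [:-I:])) = 0" by (simp add: integral_unique)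
  moreover have "degree (q + [:-I:]) \<le> n"
  proof -
    have "degree (q + [:-I:]) \<le> max (degree q) (degree [:-I:])" by (rule degree_add_le_max)
    thus ?thesis using q(1) assms by simp
  qed
  moreover have "\<forall>x. poly (q + [:-I:]) (x+1) - poly (q + [:-I:]) x = real n * x^(n-1)"
    using q(2) by (simp add: poly_monom)
  ultimately show ?thesis unfolding bprop_def by blast
qed

lemma bernoulli_poly_prop:
  assumes "n \<ge> 1" shows "bprop n (bernoulli_poly n) \<and> degree (bernoulli_poly n) \<le> n"
proof -
  obtain p where p: "bprop n p" "degree p \<le> n" using bprop_exists[OF assms] by blast
  have "bernoulli_poly n = (THE p. bprop n p)" unfolding bernoulli_poly_def bprop_def ..
  also have "\<dots> = p" by (rule the_equality[where P="bprop n"]) (auto intro: p(1) bprop_unique[OF _ p(1)])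
  finally show ?thesis using p by simp
qed


lemma poly_ext_sum: "degree (p::real poly) \<le> n \<Longrightarrow> poly p x = (\<Sum>i\<le>n. coeff p i * x ^ i)"
  unfolding poly_altdef
  by (rule sum.mono_neutral_left) (auto simp: coeff_eq_0)

lemma binom_ext: "j \<le> n \<Longrightarrow> (x+1::real)^j = (\<Sum>i\<le>n. real (j choose i) * x ^ i)"
proof -
  assume jn: "j \<le> n"
  have "(x+1)^j = (\<Sum>i\<le>j. real (j choose i) * x ^ i)" using binomial_ring[of x 1 j] by simp
  also have "\<dots> = (\<Sum>i\<le>n. real (j choose i) * x ^ i)"
    by (rule sum.mono_neutral_left) (use jn in auto)
  finally show ?thesis .
qed

lemma bern_coeff:
  assumes n1: "n \<ge> 1" and i: "i \<le> n"
  shows "(\<Sum>j\<le>n. coeff (bernoulli_poly n) j * real (j choose i)) - coeff (bernoulli_poly n) i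
        = (if i = n - 1 then real n else 0)"
proof -
  define B where "B = bernoulli_poly n"
  have bp: "bprop n B" and dB: "degree B \<le> n" using bernoulli_poly_prop[OF n1] B_def by auto
  define Q where "Q = dpoly n (\<lambda>i. \<Sum>j\<le>n. coeff B j * real (j choose i))"
  have "poly Q x = poly B (x+1)" for x
  proof -
    have "poly Q x = (\<Sum>i\<le>n. \<Sum>j\<le>n. coeff B j * (real (j choose i) * x ^ i))"
      unfolding Q_def poly_dpoly by (simp add: sum_distrib_right mult.assoc)
    also have "\<dots> = (\<Sum>j\<le>n. coeff B j * (\<Sum>i\<le>n. real (j choose i) * x ^ i))"
      by (subst sum.swap) (simp add: sum_distrib_left)
    also have "\<dots> = (\<Sum>j\<le>n. coeff B j * (x+1)^j)"
      by (rule sum.cong) (auto simp: binom_ext)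
    also have "\<dots> = poly B (x+1)" using poly_ext_sum[OF dB] by simp
    finally show ?thesis .
  qed
  hence "poly (Q - B) x = poly (monom (real n) (n-1)) x" for x
    using bp unfolding bprop_def by (simp add: poly_monom)
  hence "Q - B = monom (real n) (n-1)" using poly_eq_poly_eq_iff by blast
  hence "coeff Q i - coeff B i = coeff (monom (real n) (n-1)) i" by (metis coeff_diff)
  thus ?thesis using i unfolding Q_def B_def by (simp add: coeff_dpoly coeff_monom)
qed


lemma central_pow: "(\<And>x. b * x = x * (b::'a::ring_1)) \<Longrightarrow> b ^ m * x = x * b ^ m"
  by (metis power_commuting_commutes)

lemma ncbin:
  fixes a b :: "'a::ring_1"
  assumes cb: "\<And>x. b * x = x * b"
  shows "(a+b)^j = (\<Sum>k\<le>j. of_nat (j choose k) * a^k * b^(j-k))"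
proof (induction j)
  case 0 then show ?case by simp
next
  case (Suc j)
  define g where "g k = of_nat (j choose k) * a^k * b^(Suc j - k)" for k
  have "(a+b)^Suc j = (\<Sum>k\<le>j. of_nat (j choose k) * a^k * b^(j-k)) * a + (\<Sum>k\<le>j. of_nat (j choose k) * a^k * b^(j-k)) * b"
    by (simp only: power_Suc2 Suc distrib_left)
  also have "(\<Sum>k\<le>j. of_nat (j choose k) * a^k * b^(j-k)) * a = (\<Sum>k\<le>j. of_nat (j choose k) * a^(Suc k) * b^(j-k))"
    by (simp add: sum_distrib_right mult.assoc central_pow[OF cb] power_Suc2 del: power_Suc)
  also have "(\<Sum>k\<le>j. of_nat (j choose k) * a^k * b^(j-k)) * b = (\<Sum>k\<le>j. g k)"
    unfolding g_def by (intro sum_distrib_right[THEN trans] sum.cong refl) (simp add: mult.assoc Suc_diff_le power_Suc2[symmetric])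
  also have "(\<Sum>k\<le>j. g k) = (\<Sum>k\<le>Suc j. g k)" by (simp add: g_def binomial_eq_0)
  also have "\<dots> = g 0 + (\<Sum>k\<le>j. of_nat (j choose Suc k) * a^(Suc k) * b^(j-k))"
    by (subst sum.atMost_Suc_shift) (simp add: g_def)
  finally have "(a+b)^Suc j = b^Suc j + ((\<Sum>k\<le>j. of_nat (j choose k) * a^(Suc k) * b^(j-k)) + (\<Sum>k\<le>j. of_nat (j choose Suc k) * a^(Suc k) * b^(j-k)))"
    by (simp add: g_def algebra_simps)
  also have "\<dots> = b^Suc j + (\<Sum>k\<le>j. of_nat (Suc j choose Suc k) * a^(Suc k) * b^(j-k))"
    by (simp add: sum.distrib[symmetric] distrib_right)
  also have "\<dots> = (\<Sum>k\<le>Suc j. of_nat (Suc j choose k) * a^k * b^(Suc j-k))"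
    by (subst sum.atMost_Suc_shift) simp
  finally show ?case .
qed


locale embctx =
  fixes emb :: "complex \<Rightarrow> 'a::ring_1" and h :: 'a
  assumes emb_1: "emb 1 = 1"
    and emb_add: "\<And>a b. emb (a + b) = emb a + emb b"
    and emb_mult: "\<And>a b. emb (a * b) = emb a * emb b"
    and emb_central: "\<And>a x. emb a * x = x * emb a"
    and h_central: "\<And>x. h * x = x * h"
begin

definition E :: "real \<Rightarrow> 'a" where "E r = emb (complex_of_real r)"

lemma emb_0: "emb 0 = 0" using emb_add[of 0 0] by simp
lemma E_0[simp]: "E 0 = 0" by (simp add: E_def emb_0)
lemma E_1[simp]: "E 1 = 1" by (simp add: E_def emb_1)
lemma E_add: "E (a + b) = E a + E b" by (simp add: E_def emb_add)
lemma E_mult: "E (a * b) = E a * E b" by (simp add: E_def emb_mult)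
lemma E_diff: "E (a - b) = E a - E b" using E_add[of "a - b" b] by (simp add: algebra_simps)
lemma E_sum: "E (sum f A) = (\<Sum>x\<in>A. E (f x))"
  by (induction A rule: infinite_finite_induct) (auto simp: E_add)
lemma E_nat: "E (real k) = of_nat k"
  by (induction k) (auto simp: E_add)
lemma cE: "E r * x = x * E r" by (simp add: E_def emb_central)
lemma cH: "(- h) ^ m * x = x * (- h) ^ m"
  by (rule central_pow) (metis h_central minus_mult_left mult_minus_right)

lemma Bbar_E: "Bbar emb h n x = E (1 / real n) * (\<Sum>j\<le>n. E (coeff (bernoulli_poly n) j) * (- h) ^ (n - j) * x ^ j)"
  unfolding Bbar_def E_def ..

lemma rearr:
  assumes "k \<le> j" "j \<le> n"
  shows "E c * (- h) ^ (n - j) * (of_nat C * z ^ k * (- h) ^ (j - k)) = E (c * real C) * ((- h) ^ (n - k) * z ^ k)"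
proof -
  have "E c * (- h) ^ (n - j) * (of_nat C * z ^ k * (- h) ^ (j - k))
      = E c * (- h) ^ (n - j) * (E (real C) * ((- h) ^ (j - k) * z ^ k))"
    by (simp add: E_nat mult.assoc cH[of "j-k" "z^k"])
  also have "\<dots> = E c * (((- h) ^ (n - j) * E (real C)) * ((- h) ^ (j - k) * z ^ k))"
    by (simp only: mult.assoc)
  also have "(- h) ^ (n - j) * E (real C) = E (real C) * (- h) ^ (n - j)"
    by (rule cE[symmetric])
  also have "E c * (E (real C) * (- h) ^ (n - j) * ((- h) ^ (j - k) * z ^ k))
      = (E c * E (real C)) * (((- h) ^ (n - j) * (- h) ^ (j - k)) * z ^ k)"
    by (simp only: mult.assoc)
  also have "(- h) ^ (n - j) * (- h) ^ (j - k) = (- h) ^ (n - k)"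
    using assms by (simp add: power_add[symmetric])
  finally show ?thesis by (simp add: E_mult)
qed

lemma D1:
  assumes n1: "n \<ge> 1"
  shows "Bbar emb h n x - Bbar emb h n (x + h) = - (h * (x + h) ^ (n - 1))"
proof -
  define z where "z = x + h"
  define c where "c j = coeff (bernoulli_poly n) j" for j
  have xz: "x = z + - h" unfolding z_def by simp
  have A: "E (c j) * (- h) ^ (n - j) * x ^ j = (\<Sum>i\<le>n. E (c j * real (j choose i)) * ((- h) ^ (n - i) * z ^ i))"
    if j: "j \<le> n" for j
  proof -
    have "x ^ j = (\<Sum>k\<le>j. of_nat (j choose k) * z ^ k * (- h) ^ (j - k))"
      unfolding xz by (rule ncbin) (metis h_central minus_mult_left mult_minus_right)
    also have "\<dots> = (\<Sum>k\<le>n. of_nat (j choose k) * z ^ k * (- h) ^ (j - k))"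
    proof (rule sum.mono_neutral_left)
      show "\<forall>i\<in>{..n} - {..j}. of_nat (j choose i) * z ^ i * (- h) ^ (j - i) = 0"
        by (auto simp: binomial_eq_0)
    qed (use j in auto)
    finally have "E (c j) * (- h) ^ (n - j) * x ^ j = (\<Sum>k\<le>n. E (c j) * (- h) ^ (n - j) * (of_nat (j choose k) * z ^ k * (- h) ^ (j - k)))"
      by (simp add: sum_distrib_left)
    also have "\<dots> = (\<Sum>i\<le>n. E (c j * real (j choose i)) * ((- h) ^ (n - i) * z ^ i))"
    proof (rule sum.cong[OF refl])
      fix k assume "k \<in> {..n}"
      show "E (c j) * (- h) ^ (n - j) * (of_nat (j choose k) * z ^ k * (- h) ^ (j - k)) = E (c j * real (j choose k)) * ((- h) ^ (n - k) * z ^ k)"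
      proof (cases "k \<le> j")
        case True then show ?thesis using rearr j by blast
      next
        case False then show ?thesis by (simp add: binomial_eq_0)
      qed
    qed
    finally show ?thesis .
  qed
  have S1: "(\<Sum>j\<le>n. E (c j) * (- h) ^ (n - j) * x ^ j) = (\<Sum>i\<le>n. E (\<Sum>j\<le>n. c j * real (j choose i)) * ((- h) ^ (n - i) * z ^ i))"
  proof -
    have "(\<Sum>j\<le>n. E (c j) * (- h) ^ (n - j) * x ^ j) = (\<Sum>j\<le>n. \<Sum>i\<le>n. E (c j * real (j choose i)) * ((- h) ^ (n - i) * z ^ i))"
      by (rule sum.cong[OF refl]) (simp add: A)
    also have "\<dots> = (\<Sum>i\<le>n. \<Sum>j\<le>n. E (c j * real (j choose i)) * ((- h) ^ (n - i) * z ^ i))"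
      by (rule sum.swap)
    also have "\<dots> = (\<Sum>i\<le>n. E (\<Sum>j\<le>n. c j * real (j choose i)) * ((- h) ^ (n - i) * z ^ i))"
      by (simp only: E_sum sum_distrib_right)
    finally show ?thesis .
  qed
  have S2: "(\<Sum>j\<le>n. E (c j) * (- h) ^ (n - j) * z ^ j) = (\<Sum>i\<le>n. E (c i) * ((- h) ^ (n - i) * z ^ i))"
    by (simp add: mult.assoc)
  have "(\<Sum>j\<le>n. E (c j) * (- h) ^ (n - j) * x ^ j) - (\<Sum>j\<le>n. E (c j) * (- h) ^ (n - j) * z ^ j)
      = (\<Sum>i\<le>n. E ((\<Sum>j\<le>n. c j * real (j choose i)) - c i) * ((- h) ^ (n - i) * z ^ i))"
    unfolding S1 S2 by (simp add: E_diff left_diff_distrib sum_subtractf)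
  also have "\<dots> = (\<Sum>i\<le>n. if i = n - 1 then E (real n) * ((- h) ^ (n - i) * z ^ i) else 0)"
    by (rule sum.cong[OF refl]) (simp add: bern_coeff[OF n1] c_def)
  also have "\<dots> = E (real n) * ((- h) * z ^ (n - 1))"
    using n1 by (simp add: sum.delta')
  finally have dif: "(\<Sum>j\<le>n. E (c j) * (- h) ^ (n - j) * x ^ j) - (\<Sum>j\<le>n. E (c j) * (- h) ^ (n - j) * z ^ j)
      = E (real n) * ((- h) * z ^ (n - 1))" .
  have "Bbar emb h n x - Bbar emb h n z = E (1 / real n) * (E (real n) * ((- h) * z ^ (n - 1)))"
    unfolding Bbar_E c_def[symmetric] dif[symmetric] by (simp add: right_diff_distrib)
  also have "\<dots> = E (1 / real n * real n) * ((- h) * z ^ (n - 1))"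
    by (simp only: E_mult mult.assoc)
  also have "1 / real n * real n = 1" using n1 by simp
  finally show ?thesis unfolding z_def by simp
qed

end


lemma cm_mult:
  assumes 1: "y * a = a * y" and 2: "y * b = b * (y::'a::ring_1)"
  shows "y * (a * b) = (a * b) * y"
proof -
  have "y*(a*b) = (y*a)*b" by (simp only: mult.assoc)
  also have "\<dots> = (a*y)*b" using 1 by simp
  also have "\<dots> = a*(y*b)" by (simp only: mult.assoc)
  also have "\<dots> = a*(b*y)" using 2 by simp
  also have "\<dots> = (a*b)*y" by (simp only: mult.assoc)
  finally show ?thesis .
qed
lemma cm_add: "y * a = a * y \<Longrightarrow> y * b = b * y \<Longrightarrow> y * (a + b) = (a + b) * (y::'a::ring_1)"
  by (simp add: distrib_left distrib_right)
lemma cm_diff: "y * a = a * y \<Longrightarrow> y * b = b * y \<Longrightarrow> y * (a - b) = (a - b) * (y::'a::ring_1)"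
  by (simp add: right_diff_distrib left_diff_distrib)
lemma cm_uminus: "y * a = a * y \<Longrightarrow> y * (- a) = (- a) * (y::'a::ring_1)"
  by simp
lemma cm_pow: "y * a = a * y \<Longrightarrow> y * (a ^ m) = (a ^ m) * (y::'a::ring_1)"
  by (metis power_commuting_commutes)
lemma cm_of_nat: "y * of_nat m = of_nat m * (y::'a::ring_1)"
  by (simp add: mult_of_nat_commute)
lemma cm_sum: "(\<And>x. x \<in> A \<Longrightarrow> y * f x = f x * y) \<Longrightarrow> y * sum f A = sum f A * (y::'a::ring_1)"
  by (simp add: sum_distrib_left sum_distrib_right)
lemma cm_prod_list: "(\<And>x. x \<in> set xs \<Longrightarrow> y * x = x * y) \<Longrightarrow> y * prod_list xs = prod_list xs * (y::'a::ring_1)"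
  by (induction xs) (auto intro: cm_mult)
lemma cm_sym: "y * a = a * y \<Longrightarrow> a * y = y * (a::'a::ring_1)" by simp

lemma comm_sum: "comm X (sum f A) = (\<Sum>x\<in>A. comm X (f x))"
  unfolding comm_def by (simp add: sum_distrib_left sum_distrib_right sum_subtractf)

lemma comm_term:
  assumes "X * A = A * X" "v * X = X' * v"
  shows "comm X (A * v) = A * (X - X') * (v::'a::ring_1)"
proof -
  have "comm X (A * v) = (X * A) * v - A * (v * X)" unfolding comm_def by (simp add: mult.assoc)
  also have "\<dots> = A * X * v - A * X' * v" using assms by (simp add: mult.assoc)
  finally show ?thesis by (simp add: left_diff_distrib right_diff_distrib)
qed

lemma shift_pow:
  assumes ab: "u * a = b * (u::'a::ring_1)"
  shows "u * a ^ m = b ^ m * u"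
proof (induction m)
  case (Suc m)
  have "u * a ^ Suc m = (u * a) * a ^ m" by (simp only: power_Suc mult.assoc)
  also have "\<dots> = b * (u * a ^ m)" using ab by (simp only: mult.assoc)
  also have "\<dots> = b ^ Suc m * u" using Suc by (simp only: power_Suc mult.assoc)
  finally show ?case .
qed simp

context embctx begin
lemma shift_Bbar:
  assumes "u * a = b * u"
  shows "u * Bbar emb h n a = Bbar emb h n b * u"
proof -
  have t: "u * (E r * (- h) ^ m * a ^ j) = E r * (- h) ^ m * b ^ j * u" for r m j
  proof -
    have "u * (E r * (- h) ^ m * a ^ j) = (u * E r) * (- h) ^ m * a ^ j" by (simp only: mult.assoc)
    also have "\<dots> = E r * (u * (- h) ^ m) * a ^ j" by (simp only: cE mult.assoc)
    also have "\<dots> = E r * ((- h) ^ m * (u * a ^ j))" by (simp only: cH mult.assoc)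
    also have "\<dots> = E r * (- h) ^ m * b ^ j * u" using shift_pow[OF assms] by (simp only: mult.assoc)
    finally show ?thesis .
  qed
  have "u * Bbar emb h n a = E (1 / real n) * (\<Sum>j\<le>n. u * (E (coeff (bernoulli_poly n) j) * (- h) ^ (n - j) * a ^ j))"
  proof -
    have "u * (E (1 / real n) * S) = E (1 / real n) * (u * S)" for S
    proof -
      have "u * (E (1 / real n) * S) = (u * E (1 / real n)) * S" by (simp only: mult.assoc)
      also have "\<dots> = E (1 / real n) * (u * S)" by (simp only: cE mult.assoc)
      finally show ?thesis .
    qed
    thus ?thesis unfolding Bbar_E by (simp only: sum_distrib_left)
  qed
  also have "\<dots> = E (1 / real n) * (\<Sum>j\<le>n. E (coeff (bernoulli_poly n) j) * (- h) ^ (n - j) * b ^ j * u)"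
    by (simp only: t)
  also have "\<dots> = Bbar emb h n b * u"
    unfolding Bbar_E by (simp only: sum_distrib_right mult.assoc)
  finally show ?thesis .
qed
end


lemma cm_prod_list_map: "(\<And>j. j \<in> set xs \<Longrightarrow> y * f j = f j * y) \<Longrightarrow> y * prod_list (map f xs) = prod_list (map f xs) * (y::'a::ring_1)"
  by (rule cm_prod_list) auto

theorem lemma6p4:
  fixes emb :: "complex \<Rightarrow> 'a::ring_1"
    and h t :: 'a
    and w u ui :: "nat \<Rightarrow> 'a"
    and d :: "nat \<Rightarrow> nat \<Rightarrow> 'a"
    and N n :: nat
    and f :: "complex poly"
  assumes emb_1: "emb 1 = 1"
    and emb_add: "\<And>a b. emb (a + b) = emb a + emb b"
    and emb_mult: "\<And>a b. emb (a * b) = emb a * emb b"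
    and emb_central: "\<And>a x. emb a * x = x * emb a"
    and h_central: "\<And>x. h * x = x * h"
    and t_central: "\<And>x. t * x = x * t"
    and w_comm: "\<And>i j. i \<in> {1..N} \<Longrightarrow> j \<in> {1..N} \<Longrightarrow> w i * w j = w j * w i"
    and wd_comm: "\<And>i j k. i \<in> {1..N} \<Longrightarrow> j \<in> {1..N} \<Longrightarrow> k \<in> {1..N} \<Longrightarrow> i \<noteq> j \<Longrightarrow>
                   w k * d i j = d i j * w k"
    and dd_comm: "\<And>i j k l. i \<in> {1..N} \<Longrightarrow> j \<in> {1..N} \<Longrightarrow> k \<in> {1..N} \<Longrightarrow> l \<in> {1..N} \<Longrightarrow>
                   i \<noteq> j \<Longrightarrow> k \<noteq> l \<Longrightarrow> d i j * d k l = d k l * d i j"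
    and d_inv: "\<And>i j. i \<in> {1..N} \<Longrightarrow> j \<in> {1..N} \<Longrightarrow> i \<noteq> j \<Longrightarrow> (w i - w j) * d i j = 1"
    and u_comm: "\<And>i j. i \<in> {1..N} \<Longrightarrow> j \<in> {1..N} \<Longrightarrow> u i * u j = u j * u i"
    and u_inv1: "\<And>i. i \<in> {1..N} \<Longrightarrow> u i * ui i = 1"
    and u_inv2: "\<And>i. i \<in> {1..N} \<Longrightarrow> ui i * u i = 1"
    and uw: "\<And>i j. i \<in> {1..N} \<Longrightarrow> j \<in> {1..N} \<Longrightarrow>
               u i * w j - w j * u i = (if i = j then h * u i else 0)"
    and uiw: "\<And>i j. i \<in> {1..N} \<Longrightarrow> j \<in> {1..N} \<Longrightarrow>
               ui i * w j - w j * ui i = (if i = j then - (h * ui i) else 0)"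
    and N_pos: "N \<ge> 1"
    and n_pos: "n \<ge> 1"
  shows "comm (\<Sum>i\<in>{1..N}. Bbar emb h n (w i - of_nat (N - 1) * t)) (E1 N w u d t (peval emb f))
           = - (h * E1 N w u d t (\<lambda>x. peval emb f x * (x - of_nat (N - 1) * t + h) ^ (n - 1)))
       \<and> comm (\<Sum>i\<in>{1..N}. Bbar emb h n (w i - of_nat (N - 1) * t)) (F1 N w ui d t h (peval emb f))
           = h * F1 N w ui d t h (\<lambda>x. peval emb f x * (x - of_nat (N - 1) * t + h) ^ (n - 1))"
proof -
  interpret embctx emb h by unfold_locales (fact emb_1 emb_add emb_mult emb_central h_central)+
  define cc where "cc = (of_nat (N - 1) * t :: 'a)"
  define X where "X = (\<Sum>i\<in>{1..N}. Bbar emb h n (w i - cc))"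
  define P where "P i = prod_list (map (\<lambda>j. (w i - w j - t) * d i j) (filter (\<lambda>j. j \<noteq> i) [1..<N+1]))" for i
  define P' where "P' i = prod_list (map (\<lambda>j. (w i - w j + t) * d i j) (filter (\<lambda>j. j \<noteq> i) [1..<N+1]))" for i
  have tc: "y * t = t * y" for y using t_central by simp
  have hc: "y * h = h * y" for y using h_central by simp
  have ccc: "y * cc = cc * y" for y unfolding cc_def by (rule cm_mult[OF cm_of_nat tc])
  have ec: "y * emb a = emb a * y" for y a using emb_central by simp
  have cX: "y * X = X * y" if yw: "\<And>k. k \<in> {1..N} \<Longrightarrow> y * w k = w k * y" for y
    unfolding X_def Bbar_E
    apply (rule cm_sum)
    apply (rule cm_mult)
     apply (rule cE[symmetric])
    apply (rule cm_sum)
    apply (rule cm_mult)+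
      apply (rule cE[symmetric])
     apply (rule cH[symmetric])
    apply (rule cm_pow, rule cm_diff)
     apply (erule yw)
    apply (rule ccc)
    done
  have Xw: "X * w k = w k * X" if "k \<in> {1..N}" for k
    by (rule cm_sym, rule cX) (use w_comm that in auto)
  have Xd: "X * d i j = d i j * X" if "i \<in> {1..N}" "j \<in> {1..N}" "i \<noteq> j" for i j
    by (rule cm_sym, rule cX) (use wd_comm that in auto)
  have Xpe: "X * peval emb f y = peval emb f y * X" if "X * y = y * X" for y
    unfolding peval_def
    apply (rule cm_sum)
    apply (rule cm_mult)
     apply (rule ec)
    apply (rule cm_pow, rule that)
    done
  have memb: "j \<in> {1..N} \<and> j \<noteq> i" if "j \<in> set (filter (\<lambda>j. j \<noteq> i) [1..<N+1])" for i j
    using that by auto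
  have XP: "X * P i = P i * X" if i: "i \<in> {1..N}" for i
    unfolding P_def
    apply (rule cm_prod_list_map)
    apply (drule memb)
    apply (erule conjE)
    apply (intro cm_mult cm_diff Xw Xd tc)
    using i by auto
  have XP': "X * P' i = P' i * X" if i: "i \<in> {1..N}" for i
    unfolding P'_def
    apply (rule cm_prod_list_map)
    apply (drule memb)
    apply (erule conjE)
    apply (intro cm_mult cm_diff cm_add Xw Xd tc)
    using i by auto
  have wP: "w k * P i = P i * w k" if i: "i \<in> {1..N}" and k: "k \<in> {1..N}" for i k
    unfolding P_def
    apply (rule cm_prod_list_map)
    apply (drule memb)
    apply (erule conjE)
    apply (intro cm_mult cm_diff tc)
    using i k w_comm wd_comm by auto
  have wP': "w k * P' i = P' i * w k" if i: "i \<in> {1..N}" and k: "k \<in> {1..N}" for i k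
    unfolding P'_def
    apply (rule cm_prod_list_map)
    apply (drule memb)
    apply (erule conjE)
    apply (intro cm_mult cm_diff cm_add tc)
    using i k w_comm wd_comm by auto
  have shiftX: "v * X = (\<Sum>j\<in>{1..N}. Bbar emb h n (w j - cc + (if i = j then s else 0))) * v"
    if vw: "\<And>j. j \<in> {1..N} \<Longrightarrow> v * w j - w j * v = (if i = j then s * v else 0)" for v s i
    unfolding X_def sum_distrib_left sum_distrib_right
  proof (rule sum.cong[OF refl])
    fix j assume j: "j \<in> {1..N}"
    have "v * (w j - cc) = (w j - cc + (if i = j then s else 0)) * v"
    proof -
      have "v * (w j - cc) = v * w j - cc * v" by (simp add: right_diff_distrib ccc)
      also have "v * w j = w j * v + (if i = j then s * v else 0)" using vw[OF j] by (metis diff_add_cancel add.commute)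
      finally show ?thesis by (auto simp: algebra_simps)
    qed
    thus "v * Bbar emb h n (w j - cc) = Bbar emb h n (w j - cc + (if i = j then s else 0)) * v" by (rule shift_Bbar)
  qed
  have diffX: "X - (\<Sum>j\<in>{1..N}. Bbar emb h n (w j - cc + (if i = j then s else 0))) = Bbar emb h n (w i - cc) - Bbar emb h n (w i - cc + s)"
    if i: "i \<in> {1..N}" for i s
  proof -
    have "X - (\<Sum>j\<in>{1..N}. Bbar emb h n (w j - cc + (if i = j then s else 0)))
        = (\<Sum>j\<in>{1..N}. Bbar emb h n (w j - cc) - Bbar emb h n (w j - cc + (if i = j then s else 0)))"
      unfolding X_def by (simp add: sum_subtractf)
    also have "\<dots> = (\<Sum>j\<in>{1..N}. if j = i then Bbar emb h n (w i - cc) - Bbar emb h n (w i - cc + s) else 0)"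
      by (rule sum.cong) auto
    also have "\<dots> = Bbar emb h n (w i - cc) - Bbar emb h n (w i - cc + s)" using i by simp
    finally show ?thesis .
  qed
  have termE: "comm X (peval emb f (w i) * P i * u i) = - (h * (peval emb f (w i) * (w i - cc + h) ^ (n - 1) * P i * u i))"
    if i: "i \<in> {1..N}" for i
  proof -
    define A where "A = peval emb f (w i) * P i"
    define Q where "Q = (w i - cc + h) ^ (n - 1)"
    have XA: "X * A = A * X" unfolding A_def by (rule cm_mult[OF Xpe[OF Xw[OF i]] XP[OF i]])
    have uX: "u i * X = (\<Sum>j\<in>{1..N}. Bbar emb h n (w j - cc + (if i = j then h else 0))) * u i"
      by (rule shiftX) (use uw i in auto)
    have "comm X (A * u i) = A * (X - (\<Sum>j\<in>{1..N}. Bbar emb h n (w j - cc + (if i = j then h else 0)))) * u i"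
      by (rule comm_term[OF XA uX])
    also have "X - (\<Sum>j\<in>{1..N}. Bbar emb h n (w j - cc + (if i = j then h else 0))) = - (h * Q)"
      unfolding diffX[OF i] Q_def by (rule D1[OF n_pos])
    also have "A * (- (h * Q)) * u i = - (h * (peval emb f (w i) * Q * P i * u i))"
    proof -
      have PQ: "P i * Q = Q * P i" unfolding Q_def
        by (rule cm_pow, rule cm_add, rule cm_diff, rule wP[OF i i, symmetric], rule ccc, rule hc)
      have "A * (h * Q) = (A * h) * Q" by (simp only: mult.assoc)
      also have "\<dots> = h * (A * Q)" by (simp only: hc mult.assoc)
      also have "A * Q = peval emb f (w i) * Q * P i" unfolding A_def by (simp only: mult.assoc PQ)
      finally have "A * (h * Q) = h * (peval emb f (w i) * Q * P i)" .
      thus ?thesis by (simp add: mult.assoc)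
    qed
    finally show ?thesis unfolding A_def Q_def .
  qed
  have termF: "comm X (peval emb f (w i - h) * P' i * ui i) = h * (peval emb f (w i - h) * (w i - h - cc + h) ^ (n - 1) * P' i * ui i)"
    if i: "i \<in> {1..N}" for i
  proof -
    define A where "A = peval emb f (w i - h) * P' i"
    define Q where "Q = (w i - cc) ^ (n - 1)"
    have whc: "w i - h - cc + h = w i - cc" by (simp add: algebra_simps)
    have XA: "X * A = A * X" unfolding A_def by (rule cm_mult[OF Xpe[OF cm_diff[OF Xw[OF i] hc]] XP'[OF i]])
    have uX: "ui i * X = (\<Sum>j\<in>{1..N}. Bbar emb h n (w j - cc + (if i = j then - h else 0))) * ui i"
      by (rule shiftX) (use uiw i in auto)
    have "comm X (A * ui i) = A * (X - (\<Sum>j\<in>{1..N}. Bbar emb h n (w j - cc + (if i = j then - h else 0)))) * ui i"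
      by (rule comm_term[OF XA uX])
    also have "X - (\<Sum>j\<in>{1..N}. Bbar emb h n (w j - cc + (if i = j then - h else 0))) = h * Q"
    proof -
      have "Bbar emb h n (w i - cc + - h) - Bbar emb h n (w i - cc + - h + h) = - (h * (w i - cc + - h + h) ^ (n - 1))"
        by (rule D1[OF n_pos])
      hence "Bbar emb h n (w i - cc) - Bbar emb h n (w i - cc + - h) = h * Q" unfolding Q_def
        by (simp add: algebra_simps)
      thus ?thesis unfolding diffX[OF i] .
    qed
    also have "A * (h * Q) * ui i = h * (peval emb f (w i - h) * Q * P' i * ui i)"
    proof -
      have PQ: "P' i * Q = Q * P' i" unfolding Q_def
        by (rule cm_pow, rule cm_diff, rule wP'[OF i i, symmetric], rule ccc)
      have "A * (h * Q) = (A * h) * Q" by (simp only: mult.assoc)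
      also have "\<dots> = h * (A * Q)" by (simp only: hc mult.assoc)
      also have "A * Q = peval emb f (w i - h) * Q * P' i" unfolding A_def by (simp only: mult.assoc PQ)
      finally have "A * (h * Q) = h * (peval emb f (w i - h) * Q * P' i)" .
      thus ?thesis by (simp add: mult.assoc)
    qed
    finally show ?thesis unfolding A_def Q_def whc .
  qed
  have LE: "comm X (E1 N w u d t (peval emb f)) = - (h * E1 N w u d t (\<lambda>x. peval emb f x * (x - cc + h) ^ (n - 1)))"
  proof -
    have "comm X (E1 N w u d t (peval emb f)) = (\<Sum>i\<in>{1..N}. - (h * (peval emb f (w i) * (w i - cc + h) ^ (n - 1) * P i * u i)))"
      unfolding E1_def P_def[symmetric] comm_sum by (rule sum.cong[OF refl]) (rule termE)
    also have "\<dots> = - (h * E1 N w u d t (\<lambda>x. peval emb f x * (x - cc + h) ^ (n - 1)))"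
      unfolding E1_def P_def[symmetric] by (simp add: sum_distrib_left sum_negf)
    finally show ?thesis .
  qed
  have LF: "comm X (F1 N w ui d t h (peval emb f)) = h * F1 N w ui d t h (\<lambda>x. peval emb f x * (x - cc + h) ^ (n - 1))"
  proof -
    have "comm X (F1 N w ui d t h (peval emb f)) = (\<Sum>i\<in>{1..N}. h * (peval emb f (w i - h) * (w i - h - cc + h) ^ (n - 1) * P' i * ui i))"
      unfolding F1_def P'_def[symmetric] comm_sum by (rule sum.cong[OF refl]) (rule termF)
    also have "\<dots> = h * F1 N w ui d t h (\<lambda>x. peval emb f x * (x - cc + h) ^ (n - 1))"
      unfolding F1_def P'_def[symmetric] by (simp add: sum_distrib_left)
    finally show ?thesis .
  qed
  show ?thesis unfolding cc_def[symmetric] X_def[symmetric] using LE LF by (rule conjI)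
qed

end
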